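(* Let $\Theta(t;\lambda)$ ($t\in\mathbb{R}$, $\lambda\ge0$) be a threshold function, i.e. for every $\lambda\ge0$: (1) $\Theta(-t;\lambda)=-\Theta(t;\lambda)$; (2) $\Theta(t;\lambda)\le\Theta(t';\lambda)$ for $t\le t'$; (3) $\lim_{t\to\infty}\Theta(t;\lambda)=\infty$; (4) $0\le\Theta(t;\lambda)\le t$ for $0\le t<\infty$. For $u\ge0$ define $\Theta^{-1}(u;\lambda)=\sup\{t:\Theta(t;\lambda)\le u\}$, $s(u;\lambda)=\Theta^{-1}(u;\lambda)-u$, and $P_\Theta(\theta;\lambda)=\int_0^{|\theta|}s(u;\lambda)\,du$. Let $P(\cdot;\cdot)$ be any function such that $P(\theta;\lambda)-P(0;\lambda)=P_\Theta(\theta;\lambda)+q(\theta;\lambda)$, where $q(\cdot;\lambda)\ge0$ and $q(\Theta(\theta;\lambda);\lambda)=0$ for all $\theta$. Let $\mathbf{X}\in\mathbb{R}^{n\times p}$ have full column rank $p$, $\mathbf{y}\in\mathbb{R}^n$, $\lambda_1,\dots,\lambda_n\ge0$, and define $$f_P(\boldsymbol\beta,\boldsymbol\gamma)=\frac12\|\mathbf{y}-\mathbf{X}\boldsymbol\beta-\boldsymbol\gamma\|_2^2+\sum_{i=1}^n P(\gamma_i;\lambda_i).$$ Consider the $\Theta$-IPOD iteration: starting from any $\boldsymbol\gamma^{(0)}\in\mathbb{R}^n$, for $j\ge0$ set $\boldsymbol\beta^{(j)}=(\mathbf{X}^\top\mathbf{X})^{-1}\mathbf{X}^\top(\mathbf{y}-\boldsymbol\gamma^{(j)})$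 and $\gamma^{(j+1)}_i=\Theta(y_i-\mathbf{x}_i^\top\boldsymbol\beta^{(j)};\lambda_i)$ for each $i$. Then for every $j\ge0$, $$f_P(\boldsymbol\beta^{(j)},\boldsymbol\gamma^{(j)})\ge f_P(\boldsymbol\beta^{(j)},\boldsymbol\gamma^{(j+1)})\ge f_P(\boldsymbol\beta^{(j+1)},\boldsymbol\gamma^{(j+1)}).$$
   Context: $\mathbf{x}_i^\top$ denotes the $i$-th row of $\mathbf{X}$. The iteration alternates an ordinary least squares fit of $\mathbf{y}-\boldsymbol\gamma$ on $\mathbf{X}$ with componentwise thresholding of the residuals. *)

theory Defs
  imports "HOL-Analysis.Analysis"
begin

definition threshold_function :: "(real \<Rightarrow> real \<Rightarrow> real) \<Rightarrow> bool" where
  "threshold_function \<Theta> \<longleftrightarrow>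
     (\<forall>lm\<ge>0.
        (\<forall>t. \<Theta> (- t) lm = - \<Theta> t lm) \<and>
        (\<forall>t t'. t \<le> t' \<longrightarrow> \<Theta> t lm \<le> \<Theta> t' lm) \<and>
        filterlim (\<lambda>t. \<Theta> t lm) at_top at_top \<and>
        (\<forall>t\<ge>0. 0 \<le> \<Theta> t lm \<and> \<Theta> t lm \<le> t))"

definition theta_inv :: "(real \<Rightarrow> real \<Rightarrow> real) \<Rightarrow> real \<Rightarrow> real \<Rightarrow> real" where
  "theta_inv \<Theta> u lm = Sup {t. \<Theta> t lm \<le> u}"

definition s_fun :: "(real \<Rightarrow> real \<Rightarrow> real) \<Rightarrow> real \<Rightarrow> real \<Rightarrow> real" where
  "s_fun \<Theta> u lm = theta_inv \<Theta> u lm - u"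

definition P_Theta :: "(real \<Rightarrow> real \<Rightarrow> real) \<Rightarrow> real \<Rightarrow> real \<Rightarrow> real" where
  "P_Theta \<Theta> \<theta> lm = integral {0..\<bar>\<theta>\<bar>} (\<lambda>u. s_fun \<Theta> u lm)"

definition fP :: "(real \<Rightarrow> real \<Rightarrow> real) \<Rightarrow> ('n::finite \<Rightarrow> real) \<Rightarrow> real^'p^'n
                  \<Rightarrow> real^'n \<Rightarrow> real^'p \<Rightarrow> real^'n \<Rightarrow> real" where
  "fP P lam X y \<beta> \<gamma> = (1/2) * (norm (y - X *v \<beta> - \<gamma>))\<^sup>2 + (\<Sum>i\<in>UNIV. P (\<gamma> $ i) (lam i))"

end

theory Submission
  imports Defs
begin

context
  fixes \<Theta> :: "real \<Rightarrow> real \<Rightarrow> real" and lm :: real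
  assumes thr: "threshold_function \<Theta>" and lm: "lm \<ge> 0"
begin

lemma th_odd: "\<Theta> (- t) lm = - \<Theta> t lm"
  using thr lm unfolding threshold_function_def by blast
lemma th_mono: "t \<le> t' \<Longrightarrow> \<Theta> t lm \<le> \<Theta> t' lm"
  using thr lm unfolding threshold_function_def by blast
lemma th_lim: "filterlim (\<lambda>t. \<Theta> t lm) at_top at_top"
  using thr lm unfolding threshold_function_def by blast
lemma th_pos: "t \<ge> 0 \<Longrightarrow> 0 \<le> \<Theta> t lm \<and> \<Theta> t lm \<le> t"
  using thr lm unfolding threshold_function_def by blast

lemma th0: "\<Theta> 0 lm = 0"
  using th_odd[of 0] by simp

lemma S_bdd: "bdd_above {t. \<Theta> t lm \<le> u}"
proof -
  have "eventually (\<lambda>t. \<Theta> t lm \<ge> u + 1) at_top"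
    using th_lim by (simp add: filterlim_at_top)
  then obtain N where N: "\<And>t. t \<ge> N \<Longrightarrow> \<Theta> t lm \<ge> u + 1"
    by (auto simp: eventually_at_top_linorder)
  have "\<And>t. \<Theta> t lm \<le> u \<Longrightarrow> t \<le> N"
    using N by (meson add_le_same_cancel1 le_cases not_one_le_zero order_trans)
  then show ?thesis by (auto simp: bdd_above_def)
qed

lemma S_ne: "u \<ge> 0 \<Longrightarrow> {t. \<Theta> t lm \<le> u} \<noteq> {}"
  using th0 by (auto intro!: exI[of _ 0])

lemma inv_upper: "\<Theta> t lm \<le> u \<Longrightarrow> t \<le> theta_inv \<Theta> u lm"
  unfolding theta_inv_def by (rule cSup_upper) (auto intro: S_bdd)

lemma inv_least: "u \<ge> 0 \<Longrightarrow> (\<And>t. \<Theta> t lm \<le> u \<Longrightarrow> t \<le> z) \<Longrightarrow> theta_inv \<Theta> u lm \<le> z"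
  unfolding theta_inv_def by (rule cSup_least) (use S_ne in auto)

lemma inv_mono: "0 \<le> u \<Longrightarrow> u \<le> v \<Longrightarrow> theta_inv \<Theta> u lm \<le> theta_inv \<Theta> v lm"
  by (rule inv_least) (auto intro: inv_upper)

lemma s_int: "(\<lambda>u. s_fun \<Theta> u lm) integrable_on {a..b}"
  if "0 \<le> a" for a b
proof -
  have "mono_on {a..b} (\<lambda>u. theta_inv \<Theta> u lm)"
    using that by (auto intro!: mono_onI inv_mono)
  then have "(\<lambda>u. theta_inv \<Theta> u lm) integrable_on {a..b}" by (rule integrable_on_mono_on)
  moreover have "(\<lambda>u. u) integrable_on {a..b}" by (intro integrable_continuous_interval continuous_intros)
  ultimately show ?thesis unfolding s_fun_def by (rule integrable_diff)
qed

lemma lin_int: "(a::real) \<le> b \<Longrightarrow> ((\<lambda>u. z - u) has_integral ((z*b - b^2/2) - (z*a - a^2/2))) {a..b}"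
  by (rule fundamental_theorem_of_calculus)
     (auto intro!: derivative_eq_intros simp flip: has_real_derivative_iff_has_vector_derivative)

lemma key_pos:
  assumes z: "z \<ge> 0" and th: "\<theta> \<ge> 0"
  shows "(z - \<Theta> z lm)^2/2 + P_Theta \<Theta> (\<Theta> z lm) lm \<le> (z - \<theta>)^2/2 + P_Theta \<Theta> \<theta> lm"
proof -
  define a where "a = \<Theta> z lm"
  have a0: "a \<ge> 0" using th_pos[OF z] a_def by simp
  let ?s = "\<lambda>u. s_fun \<Theta> u lm"
  have PT: "P_Theta \<Theta> x lm = integral {0..x} ?s" if "x \<ge> 0" for x
    using that by (simp add: P_Theta_def)
  show ?thesis
  proof (cases "a \<le> \<theta>")
    case True
    have comb: "integral {0..\<theta>} ?s = integral {0..a} ?s + integral {a..\<theta>} ?s"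
      using Henstock_Kurzweil_Integration.integral_combine[OF a0 True s_int[of 0 \<theta>, simplified]] by simp
    have "integral {a..\<theta>} (\<lambda>u. z - u) \<le> integral {a..\<theta>} ?s"
    proof (rule integral_le)
      show "(\<lambda>u. z - u) integrable_on {a..\<theta>}" using lin_int[OF True] by blast
      show "?s integrable_on {a..\<theta>}" using s_int[of a] a0 by simp
      fix u assume "u \<in> {a..\<theta>}"
      then have "\<Theta> z lm \<le> u" using a_def by simp
      then show "z - u \<le> ?s u" using inv_upper unfolding s_fun_def by force
    qed
    moreover have "integral {a..\<theta>} (\<lambda>u. z - u) = (z*\<theta> - \<theta>^2/2) - (z*a - a^2/2)"
      using lin_int[OF True] by (rule integral_unique)
    moreover have "(z-\<theta>)^2/2 - (z-a)^2/2 = -((z*\<theta> - \<theta>^2/2) - (z*a - a^2/2))"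
      by (simp add: power2_eq_square field_simps)
    ultimately show ?thesis using comb PT[OF th] PT[OF a0] unfolding a_def[symmetric]
      by linarith
  next
    case False
    then have F: "\<theta> \<le> a" by simp
    have comb: "integral {0..a} ?s = integral {0..\<theta>} ?s + integral {\<theta>..a} ?s"
      using Henstock_Kurzweil_Integration.integral_combine[OF th F s_int[of 0 a, simplified]] by simp
    have "integral {\<theta><..<a} ?s \<le> integral {\<theta><..<a} (\<lambda>u. z - u)"
    proof (rule integral_le)
      show "(\<lambda>u. z - u) integrable_on {\<theta><..<a}" using lin_int[OF F]
        by (auto simp: integrable_on_open_interval_real)
      show "?s integrable_on {\<theta><..<a}" using s_int[of \<theta>] th
        by (simp add: integrable_on_open_interval_real)
      fix u assume u: "u \<in> {\<theta><..<a}"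
      have "theta_inv \<Theta> u lm \<le> z"
      proof (rule inv_least)
        show "u \<ge> 0" using u th by simp
        fix t assume "\<Theta> t lm \<le> u"
        then show "t \<le> z" using u a_def th_mono[of z t] by force
      qed
      then show "?s u \<le> z - u" unfolding s_fun_def by simp
    qed
    moreover have "integral {\<theta>..a} (\<lambda>u. z - u) = (z*a - a^2/2) - (z*\<theta> - \<theta>^2/2)"
      using lin_int[OF F] by (rule integral_unique)
    moreover have "(z-\<theta>)^2/2 - (z-a)^2/2 = ((z*a - a^2/2) - (z*\<theta> - \<theta>^2/2))"
      by (simp add: power2_eq_square field_simps)
    ultimately show ?thesis using comb PT[OF th] PT[OF a0] unfolding a_def[symmetric]
      by (simp add: integral_open_interval_real)
  qed
qed

lemma key:
  "(z - \<Theta> z lm)^2/2 + P_Theta \<Theta> (\<Theta> z lm) lm \<le> (z - \<theta>)^2/2 + P_Theta \<Theta> \<theta> lm"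
proof -
  have PA: "P_Theta \<Theta> x lm = P_Theta \<Theta> \<bar>x\<bar> lm" for x by (simp add: P_Theta_def)
  have gen: "(w - \<Theta> w lm)^2/2 + P_Theta \<Theta> (\<Theta> w lm) lm \<le> (w - x)^2/2 + P_Theta \<Theta> x lm"
    if w: "w \<ge> 0" for w x
  proof -
    have "(w - \<Theta> w lm)^2/2 + P_Theta \<Theta> (\<Theta> w lm) lm \<le> (w - \<bar>x\<bar>)^2/2 + P_Theta \<Theta> \<bar>x\<bar> lm"
      using key_pos[OF w] by simp
    also have "(w - \<bar>x\<bar>)^2 \<le> (w - x)^2" using w
      by (cases "x \<ge> 0") (auto simp: power2_eq_square algebra_simps mult_le_0_iff)
    finally show ?thesis using PA[of x] by simp
  qed
  show ?thesis
  proof (cases "z \<ge> 0")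
    case True then show ?thesis by (rule gen)
  next
    case False
    have "(- z - \<Theta> (-z) lm)^2/2 + P_Theta \<Theta> (\<Theta> (-z) lm) lm \<le> (- z - (-\<theta>))^2/2 + P_Theta \<Theta> (-\<theta>) lm"
      using False by (intro gen) simp
    then show ?thesis using PA[of "-\<theta>"] PA[of \<theta>] PA[of "\<Theta> z lm"] PA[of "- \<Theta> z lm"]
      by (simp add: th_odd power2_eq_square algebra_simps)
  qed
qed

end

lemma fP_coord:
  fixes X :: "real^'p^'n::finite"
  shows "fP P lam X y b g = (\<Sum>i\<in>UNIV. (y $ i - row i X \<bullet> b - g $ i)^2/2 + P (g $ i) (lam i))"
  unfolding fP_def power2_norm_eq_inner
  by (simp add: inner_vec_def sum.distrib sum_divide_distrib matrix_vector_mult_def row_def power2_eq_square)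

lemma inner_transpose: "x \<bullet> (transpose A *v y) = (A *v x) \<bullet> (y::real^'m)"
  for A :: "real^'n^'m"
  by (metis adjoint_matrix adjoint_works matrix_vector_mul_linear)

lemma lsq:
  fixes X :: "real^'p^'n" and r :: "real^'n"
  assumes rankX: "rank X = CARD('p)"
  shows "norm (r - X *v (matrix_inv (transpose X ** X) *v (transpose X *v r))) \<le> norm (r - X *v c)"
proof -
  let ?M = "transpose X ** X"
  have injX: "inj ((*v) X)" using rankX full_rank_injective by blast
  have "\<forall>v. ?M *v v = 0 \<longrightarrow> v = 0"
  proof (intro allI impI)
    fix v assume "?M *v v = 0"
    then have "v \<bullet> (transpose X *v (X *v v)) = 0" by (simp add: matrix_vector_mul_assoc)
    then have "(X *v v) \<bullet> (X *v v) = 0" by (metis inner_transpose)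
    then have "X *v v = X *v 0" by simp
    then show "v = 0" using injX by (meson injD)
  qed
  then have "\<exists>B. B ** ?M = mat 1" by (simp add: matrix_left_invertible_ker)
  then have "invertible ?M" by (simp add: invertible_left_inverse)
  then have MM: "?M ** matrix_inv ?M = mat 1"
    unfolding invertible_def matrix_inv_def by (rule someI_ex[where P="\<lambda>A'. ?M ** A' = mat 1 \<and> A' ** ?M = mat 1", THEN conjunct1])
  define b where "b = matrix_inv ?M *v (transpose X *v r)"
  have nb: "?M *v b = transpose X *v r"
    unfolding b_def by (simp add: matrix_vector_mul_assoc MM)
  have orth: "transpose X *v (r - X *v b) = 0"
    using nb by (simp add: matrix_vector_mult_diff_distrib matrix_vector_mul_assoc del: transpose_matrix_vector)
  have "orthogonal (r - X *v b) (X *v (b - c))"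
    unfolding orthogonal_def using orth inner_transpose[of "b - c" X "r - X *v b"]
    by (simp add: inner_commute)
  then have "(norm ((r - X *v b) + X *v (b - c)))^2 = (norm (r - X *v b))^2 + (norm (X *v (b - c)))^2"
    by (rule norm_add_Pythagorean)
  moreover have "(r - X *v b) + X *v (b - c) = r - X *v c"
    by (simp add: matrix_vector_mult_diff_distrib)
  ultimately have "(norm (r - X *v b))^2 \<le> (norm (r - X *v c))^2" by simp
  then show ?thesis unfolding b_def by (simp add: power2_le_iff_abs_le)
qed

theorem theorem1:
  fixes \<Theta> P q :: "real \<Rightarrow> real \<Rightarrow> real"
    and X :: "real^'p^'n" and y :: "real^'n" and lam :: "'n \<Rightarrow> real"
    and \<beta> :: "nat \<Rightarrow> real^'p" and \<gamma> :: "nat \<Rightarrow> real^'n"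
  assumes thr: "threshold_function \<Theta>"
    and decomp: "\<And>\<theta> lm. lm \<ge> 0 \<Longrightarrow> P \<theta> lm - P 0 lm = P_Theta \<Theta> \<theta> lm + q \<theta> lm"
    and q_nonneg: "\<And>\<theta> lm. lm \<ge> 0 \<Longrightarrow> q \<theta> lm \<ge> 0"
    and q_zero: "\<And>\<theta> lm. lm \<ge> 0 \<Longrightarrow> q (\<Theta> \<theta> lm) lm = 0"
    and rankX: "rank X = CARD('p)"
    and lam_nonneg: "\<And>i. lam i \<ge> 0"
    and beta_def: "\<And>j. \<beta> j = matrix_inv (transpose X ** X) *v (transpose X *v (y - \<gamma> j))"
    and gamma_step: "\<And>j i. \<gamma> (Suc j) $ i = \<Theta> (y $ i - row i X \<bullet> \<beta> j) (lam i)"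
  shows "fP P lam X y (\<beta> j) (\<gamma> j) \<ge> fP P lam X y (\<beta> j) (\<gamma> (Suc j)) \<and>
         fP P lam X y (\<beta> j) (\<gamma> (Suc j)) \<ge> fP P lam X y (\<beta> (Suc j)) (\<gamma> (Suc j))"
proof
  show "fP P lam X y (\<beta> j) (\<gamma> j) \<ge> fP P lam X y (\<beta> j) (\<gamma> (Suc j))"
    unfolding fP_coord
  proof (rule sum_mono)
    fix i
    define z where "z = y $ i - row i X \<bullet> \<beta> j"
    define g where "g = \<gamma> j $ i"
    let ?l = "lam i"
    have l: "?l \<ge> 0" by (rule lam_nonneg)
    have k: "(z - \<Theta> z ?l)^2/2 + P_Theta \<Theta> (\<Theta> z ?l) ?l \<le> (z - g)^2/2 + P_Theta \<Theta> g ?l"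
      by (rule key[OF thr l])
    have "P (\<Theta> z ?l) ?l = P 0 ?l + P_Theta \<Theta> (\<Theta> z ?l) ?l"
      using decomp[OF l, of "\<Theta> z ?l"] q_zero[OF l, of z] by simp
    moreover have "P g ?l \<ge> P 0 ?l + P_Theta \<Theta> g ?l"
      using decomp[OF l, of g] q_nonneg[OF l, of g] by simp
    ultimately have "(z - \<Theta> z ?l)^2/2 + P (\<Theta> z ?l) ?l \<le> (z - g)^2/2 + P g ?l"
      using k by linarith
    then show "(y $ i - row i X \<bullet> \<beta> j - \<gamma> (Suc j) $ i)\<^sup>2 / 2 + P (\<gamma> (Suc j) $ i) (lam i)
          \<le> (y $ i - row i X \<bullet> \<beta> j - \<gamma> j $ i)\<^sup>2 / 2 + P (\<gamma> j $ i) (lam i)"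
      by (simp add: gamma_step z_def g_def)
  qed
next
  have "norm (y - \<gamma> (Suc j) - X *v \<beta> (Suc j)) \<le> norm (y - \<gamma> (Suc j) - X *v \<beta> j)"
    unfolding beta_def[of "Suc j"] by (rule lsq[OF rankX])
  then have "(norm (y - X *v \<beta> (Suc j) - \<gamma> (Suc j)))^2 \<le> (norm (y - X *v \<beta> j - \<gamma> (Suc j)))^2"
    by (simp add: diff_commute power_mono algebra_simps)
  then show "fP P lam X y (\<beta> j) (\<gamma> (Suc j)) \<ge> fP P lam X y (\<beta> (Suc j)) (\<gamma> (Suc j))"
    unfolding fP_def by simp
qed

end
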